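(* Let $S$ be a quasi-adequate semigroup with an adequate transversal $S^0$, and let $x,y$ be regular elements of $S$. Then $\overline{xy}=\overline{x}\,\overline{y}$.
   Context: For a semigroup $S$, $S^1$ is $S$ with an identity adjoined, $\mathcal{L},\mathcal{R}$ Green's relations. $\mathcal{R}^\ast=\{(a,b):\forall x,y\in S^1,\ xa=ya\iff xb=yb\}$, $\mathcal{L}^\ast=\{(a,b):\forall x,y\in S^1,\ ax=ay\iff bx=by\}$. $S$ is abundant if each $\mathcal{R}^\ast$- and $\mathcal{L}^\ast$-class contains an idempotent; adequate if also idempotents commute (then $a^+$, $a^\ast$ are the unique idempotents $\mathcal{R}^\ast$-, resp. $\mathcal{L}^\ast$-related to $a$). Quasi-adequate: abundant with idempotents forming a subsemigroup. An abundant subsemigroup $U$ of abundant $S$ is a $\ast$-subsemigroup if $\mathcal{L}^\ast(U)=\mathcal{L}^\ast(S)\cap(U\times U)$, $\mathcal{R}^\ast(U)=\mathcal{R}^\ast(S)\cap(U\times U)$. An adequate $\ast$-subsemigroup $S^0$ of abundant $S$ is an adequate transversal if each $x\in S$ has a unique $\overline{x}\in S^0$ and idempotents $e,f$ of $S$ with $x=e\overline{x}f$, $e\,\mathcal{L}\,\overline{x}^+$, $f\,\mathcal{R}\,\overline{x}^\ast$. *)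

theory Defs
  imports Main
begin

text \<open>Semigroups are modelled as a multiplicatively closed carrier set inside a
type of class semigroup_mult. The monoid S^1 is modelled by 'a option, where None
plays the role of the adjoined identity.\<close>

definition subsemigroup :: "'a::semigroup_mult set \<Rightarrow> bool" where
  "subsemigroup A \<longleftrightarrow> (\<forall>a\<in>A. \<forall>b\<in>A. a * b \<in> A)"

definition ones :: "'a set \<Rightarrow> 'a option set" where
  "ones A = insert None (Some ` A)"

fun lm :: "'a::semigroup_mult option \<Rightarrow> 'a \<Rightarrow> 'a" where
  "lm None a = a"
| "lm (Some x) a = x * a"

fun rm :: "'a::semigroup_mult \<Rightarrow> 'a option \<Rightarrow> 'a" where
  "rm a None = a"
| "rm a (Some x) = a * x"

definition idems :: "'a::semigroup_mult set \<Rightarrow> 'a set" where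
  "idems A = {e \<in> A. e * e = e}"

definition greenL :: "'a::semigroup_mult set \<Rightarrow> ('a \<times> 'a) set" where
  "greenL A = {(a, b). a \<in> A \<and> b \<in> A \<and>
     (\<lambda>x. lm x a) ` ones A = (\<lambda>x. lm x b) ` ones A}"

definition greenR :: "'a::semigroup_mult set \<Rightarrow> ('a \<times> 'a) set" where
  "greenR A = {(a, b). a \<in> A \<and> b \<in> A \<and>
     (\<lambda>x. rm a x) ` ones A = (\<lambda>x. rm b x) ` ones A}"

definition Rstar :: "'a::semigroup_mult set \<Rightarrow> ('a \<times> 'a) set" where
  "Rstar A = {(a, b). a \<in> A \<and> b \<in> A \<and>
     (\<forall>x\<in>ones A. \<forall>y\<in>ones A. lm x a = lm y a \<longleftrightarrow> lm x b = lm y b)}"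

definition Lstar :: "'a::semigroup_mult set \<Rightarrow> ('a \<times> 'a) set" where
  "Lstar A = {(a, b). a \<in> A \<and> b \<in> A \<and>
     (\<forall>x\<in>ones A. \<forall>y\<in>ones A. rm a x = rm a y \<longleftrightarrow> rm b x = rm b y)}"

definition abundant :: "'a::semigroup_mult set \<Rightarrow> bool" where
  "abundant A \<longleftrightarrow> subsemigroup A \<and>
     (\<forall>a\<in>A. \<exists>e\<in>idems A. (a, e) \<in> Rstar A) \<and>
     (\<forall>a\<in>A. \<exists>e\<in>idems A. (a, e) \<in> Lstar A)"

definition adequate :: "'a::semigroup_mult set \<Rightarrow> bool" where
  "adequate A \<longleftrightarrow> abundant A \<and> (\<forall>e\<in>idems A. \<forall>f\<in>idems A. e * f = f * e)"

definition quasi_adequate :: "'a::semigroup_mult set \<Rightarrow> bool" where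
  "quasi_adequate A \<longleftrightarrow> abundant A \<and> subsemigroup (idems A)"

definition star_subsemigroup :: "'a::semigroup_mult set \<Rightarrow> 'a set \<Rightarrow> bool" where
  "star_subsemigroup U A \<longleftrightarrow> U \<subseteq> A \<and> abundant U \<and>
     Lstar U = Lstar A \<inter> (U \<times> U) \<and> Rstar U = Rstar A \<inter> (U \<times> U)"

definition plus_of :: "'a::semigroup_mult set \<Rightarrow> 'a \<Rightarrow> 'a" where
  "plus_of U a = (THE e. e \<in> idems U \<and> (a, e) \<in> Rstar U)"

definition star_of :: "'a::semigroup_mult set \<Rightarrow> 'a \<Rightarrow> 'a" where
  "star_of U a = (THE e. e \<in> idems U \<and> (a, e) \<in> Lstar U)"

definition transversal_rep :: "'a::semigroup_mult set \<Rightarrow> 'a set \<Rightarrow> 'a \<Rightarrow> 'a \<Rightarrow> bool" where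
  "transversal_rep S0 S x x0 \<longleftrightarrow> x0 \<in> S0 \<and>
     (\<exists>e\<in>idems S. \<exists>f\<in>idems S. x = e * x0 * f \<and>
        (e, plus_of S0 x0) \<in> greenL S \<and> (f, star_of S0 x0) \<in> greenR S)"

definition adequate_transversal :: "'a::semigroup_mult set \<Rightarrow> 'a set \<Rightarrow> bool" where
  "adequate_transversal S0 S \<longleftrightarrow> adequate S0 \<and> star_subsemigroup S0 S \<and>
     (\<forall>x\<in>S. \<exists>!x0. transversal_rep S0 S x x0)"

definition bar :: "'a::semigroup_mult set \<Rightarrow> 'a set \<Rightarrow> 'a \<Rightarrow> 'a" where
  "bar S0 S x = (THE x0. transversal_rep S0 S x x0)"

definition regular_in :: "'a::semigroup_mult set \<Rightarrow> 'a \<Rightarrow> bool" where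
  "regular_in S x \<longleftrightarrow> x \<in> S \<and> (\<exists>y\<in>S. x * y * x = x)"

end

theory Submission
  imports Defs
begin

lemma ml: "x * y = r \<Longrightarrow> x * (y * z) = r * (z::'a::semigroup_mult)"
  by (metis mult.assoc)

lemma lm_mult: "lm w a * b = lm w (a * b)"
  by (cases w) (auto simp: mult.assoc)

lemma rm_mult: "b * rm a x = rm (b * a) x"
  by (cases x) (auto simp: mult.assoc)

lemma lm_in: "subsemigroup A \<Longrightarrow> w \<in> ones A \<Longrightarrow> a \<in> A \<Longrightarrow> lm w a \<in> A"
  by (cases w) (auto simp: ones_def subsemigroup_def)

lemma rm_in: "subsemigroup A \<Longrightarrow> w \<in> ones A \<Longrightarrow> a \<in> A \<Longrightarrow> rm a w \<in> A"
  by (cases w) (auto simp: ones_def subsemigroup_def)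

lemma greenL_idem:
  assumes "subsemigroup A" "e \<in> A" "f \<in> A" "e * e = e" "f * f = f"
  shows "(e, f) \<in> greenL A \<longleftrightarrow> e * f = e \<and> f * e = f"
proof
  assume h: "(e, f) \<in> greenL A"
  hence eq: "(\<lambda>x. lm x e) ` ones A = (\<lambda>x. lm x f) ` ones A" by (simp add: greenL_def)
  have "e \<in> (\<lambda>x. lm x e) ` ones A" by (force simp: ones_def)
  then obtain w where w: "e = lm w f" using eq by auto
  have "f \<in> (\<lambda>x. lm x f) ` ones A" by (force simp: ones_def)
  then obtain v where v: "f = lm v e" using eq by (metis imageE)
  have "e * f = e" using w assms(5) by (metis lm_mult)
  moreover have "f * e = f" using v assms(4) by (metis lm_mult)
  ultimately show "e * f = e \<and> f * e = f" by simp
next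
  assume h: "e * f = e \<and> f * e = f"
  have sub: "(\<lambda>x. lm x a) ` ones A \<subseteq> (\<lambda>x. lm x b) ` ones A"
    if "a \<in> A" "b \<in> A" "a * b = a" for a b
  proof
    fix z assume "z \<in> (\<lambda>x. lm x a) ` ones A"
    then obtain w where w: "w \<in> ones A" "z = lm w a" by auto
    have "z = lm (Some (lm w a)) b" using w that by (simp add: lm_mult)
    moreover have "Some (lm w a) \<in> ones A" using lm_in[OF assms(1) w(1) that(1)] by (simp add: ones_def)
    ultimately show "z \<in> (\<lambda>x. lm x b) ` ones A" by blast
  qed
  show "(e, f) \<in> greenL A" unfolding greenL_def using sub[of e f] sub[of f e] h assms by auto
qed

lemma greenR_idem:
  assumes "subsemigroup A" "e \<in> A" "f \<in> A" "e * e = e" "f * f = f"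
  shows "(e, f) \<in> greenR A \<longleftrightarrow> f * e = e \<and> e * f = f"
proof
  assume h: "(e, f) \<in> greenR A"
  hence eq: "(\<lambda>x. rm e x) ` ones A = (\<lambda>x. rm f x) ` ones A" by (simp add: greenR_def)
  have "e \<in> (\<lambda>x. rm e x) ` ones A" by (force simp: ones_def)
  then obtain w where w: "e = rm f w" using eq by auto
  have "f \<in> (\<lambda>x. rm f x) ` ones A" by (force simp: ones_def)
  then obtain v where v: "f = rm e v" using eq by (metis imageE)
  have "f * e = e" using w assms(5) by (metis rm_mult)
  moreover have "e * f = f" using v assms(4) by (metis rm_mult)
  ultimately show "f * e = e \<and> e * f = f" by simp
next
  assume h: "f * e = e \<and> e * f = f"
  have sub: "(\<lambda>x. rm a x) ` ones A \<subseteq> (\<lambda>x. rm b x) ` ones A"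
    if "a \<in> A" "b \<in> A" "b * a = a" for a b
  proof
    fix z assume "z \<in> (\<lambda>x. rm a x) ` ones A"
    then obtain w where w: "w \<in> ones A" "z = rm a w" by auto
    have "z = rm b (Some (rm a w))" using w that by (simp add: rm_mult)
    moreover have "Some (rm a w) \<in> ones A" using rm_in[OF assms(1) w(1) that(1)] by (simp add: ones_def)
    ultimately show "z \<in> (\<lambda>x. rm b x) ` ones A" by blast
  qed
  show "(e, f) \<in> greenR A" unfolding greenR_def using sub[of e f] sub[of f e] h assms by auto
qed

lemma rs_apply:
  assumes "(a, b) \<in> Rstar A" "u \<in> A" "v \<in> A" "u * a = v * a"
  shows "u * b = v * b"
proof -
  have "\<forall>x\<in>ones A. \<forall>y\<in>ones A. lm x a = lm y a \<longleftrightarrow> lm x b = lm y b"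
    using assms(1) by (simp add: Rstar_def)
  hence "lm (Some u) a = lm (Some v) a \<longleftrightarrow> lm (Some u) b = lm (Some v) b"
    using assms(2,3) by (auto simp: ones_def)
  thus ?thesis using assms(4) by simp
qed

lemma rs_apply1:
  assumes "(a, b) \<in> Rstar A" "u \<in> A" "u * a = a"
  shows "u * b = b"
proof -
  have "\<forall>x\<in>ones A. \<forall>y\<in>ones A. lm x a = lm y a \<longleftrightarrow> lm x b = lm y b"
    using assms(1) by (simp add: Rstar_def)
  hence "lm (Some u) a = lm None a \<longleftrightarrow> lm (Some u) b = lm None b"
    using assms(2) by (auto simp: ones_def)
  thus ?thesis using assms(3) by simp
qed

lemma rs_idem:
  assumes "(a, b) \<in> Rstar A" "b \<in> A" "b * b = b"
  shows "b * a = a"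
proof -
  have "\<forall>x\<in>ones A. \<forall>y\<in>ones A. lm x a = lm y a \<longleftrightarrow> lm x b = lm y b"
    using assms(1) by (simp add: Rstar_def)
  hence "lm (Some b) a = lm None a \<longleftrightarrow> lm (Some b) b = lm None b"
    using assms(2) by (auto simp: ones_def)
  thus ?thesis using assms(3) by simp
qed

lemma ls_apply:
  assumes "(a, b) \<in> Lstar A" "u \<in> A" "v \<in> A" "a * u = a * v"
  shows "b * u = b * v"
proof -
  have "\<forall>x\<in>ones A. \<forall>y\<in>ones A. rm a x = rm a y \<longleftrightarrow> rm b x = rm b y"
    using assms(1) by (simp add: Lstar_def)
  hence "rm a (Some u) = rm a (Some v) \<longleftrightarrow> rm b (Some u) = rm b (Some v)"
    using assms(2,3) by (auto simp: ones_def)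
  thus ?thesis using assms(4) by simp
qed

lemma ls_apply1:
  assumes "(a, b) \<in> Lstar A" "u \<in> A" "a * u = a"
  shows "b * u = b"
proof -
  have "\<forall>x\<in>ones A. \<forall>y\<in>ones A. rm a x = rm a y \<longleftrightarrow> rm b x = rm b y"
    using assms(1) by (simp add: Lstar_def)
  hence "rm a (Some u) = rm a None \<longleftrightarrow> rm b (Some u) = rm b None"
    using assms(2) by (auto simp: ones_def)
  thus ?thesis using assms(3) by simp
qed

lemma ls_idem:
  assumes "(a, b) \<in> Lstar A" "b \<in> A" "b * b = b"
  shows "a * b = a"
proof -
  have "\<forall>x\<in>ones A. \<forall>y\<in>ones A. rm a x = rm a y \<longleftrightarrow> rm b x = rm b y"
    using assms(1) by (simp add: Lstar_def)
  hence "rm a (Some b) = rm a None \<longleftrightarrow> rm b (Some b) = rm b None"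
    using assms(2) by (auto simp: ones_def)
  thus ?thesis using assms(3) by simp
qed

lemma rs_intro:
  assumes "a \<in> A" "s \<in> A" "s * a = a" "a * w = s"
  shows "(a, s) \<in> Rstar A"
  unfolding Rstar_def
proof (clarsimp simp: assms(1,2))
  fix x y assume "x \<in> ones A" "y \<in> ones A"
  show "(lm x a = lm y a) = (lm x s = lm y s)"
  proof
    assume "lm x a = lm y a"
    hence "lm x a * w = lm y a * w" by simp
    thus "lm x s = lm y s" by (simp add: lm_mult assms(4))
  next
    assume "lm x s = lm y s"
    hence "lm x s * a = lm y s * a" by simp
    thus "lm x a = lm y a" by (simp add: lm_mult assms(3))
  qed
qed

lemma ls_intro:
  assumes "a \<in> A" "s \<in> A" "a * s = a" "w * a = s"
  shows "(a, s) \<in> Lstar A"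
  unfolding Lstar_def
proof (clarsimp simp: assms(1,2))
  fix x y assume "x \<in> ones A" "y \<in> ones A"
  show "(rm a x = rm a y) = (rm s x = rm s y)"
  proof
    assume "rm a x = rm a y"
    hence "w * rm a x = w * rm a y" by simp
    thus "rm s x = rm s y" by (simp add: rm_mult assms(4))
  next
    assume "rm s x = rm s y"
    hence "a * rm s x = a * rm s y" by simp
    thus "rm a x = rm a y" by (simp add: rm_mult assms(3))
  qed
qed


lemma plus_unique:
  assumes "adequate S0" "e1 \<in> idems S0" "e2 \<in> idems S0" "(a, e1) \<in> Rstar S0" "(a, e2) \<in> Rstar S0"
  shows "e1 = e2"
proof -
  have i1: "e1 \<in> S0" "e1 * e1 = e1" "e2 \<in> S0" "e2 * e2 = e2" using assms(2,3) by (auto simp: idems_def)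
  have "e1 * a = a" using rs_idem[OF assms(4) i1(1,2)] .
  hence a: "e1 * e2 = e2" using rs_apply1[OF assms(5) i1(1)] by simp
  have "e2 * a = a" using rs_idem[OF assms(5) i1(3,4)] .
  hence b: "e2 * e1 = e1" using rs_apply1[OF assms(4) i1(3)] by simp
  have "e1 * e2 = e2 * e1" using assms(1-3) by (simp add: adequate_def)
  thus ?thesis using a b by simp
qed

lemma star_unique:
  assumes "adequate S0" "e1 \<in> idems S0" "e2 \<in> idems S0" "(a, e1) \<in> Lstar S0" "(a, e2) \<in> Lstar S0"
  shows "e1 = e2"
proof -
  have i1: "e1 \<in> S0" "e1 * e1 = e1" "e2 \<in> S0" "e2 * e2 = e2" using assms(2,3) by (auto simp: idems_def)
  have "a * e1 = a" using ls_idem[OF assms(4) i1(1,2)] .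
  hence a: "e2 * e1 = e2" using ls_apply1[OF assms(5) i1(1)] by simp
  have "a * e2 = a" using ls_idem[OF assms(5) i1(3,4)] .
  hence b: "e1 * e2 = e1" using ls_apply1[OF assms(4) i1(3)] by simp
  have "e1 * e2 = e2 * e1" using assms(1-3) by (simp add: adequate_def)
  thus ?thesis using a b by simp
qed

lemma plus_of_props:
  assumes "adequate S0" "a \<in> S0"
  shows "plus_of S0 a \<in> idems S0 \<and> (a, plus_of S0 a) \<in> Rstar S0"
proof -
  obtain e where e: "e \<in> idems S0" "(a, e) \<in> Rstar S0"
    using assms by (auto simp: adequate_def abundant_def)
  have "\<exists>!e. e \<in> idems S0 \<and> (a, e) \<in> Rstar S0"
    using e plus_unique[OF assms(1)] by blast
  thus ?thesis unfolding plus_of_def by (rule theI')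
qed

lemma star_of_props:
  assumes "adequate S0" "a \<in> S0"
  shows "star_of S0 a \<in> idems S0 \<and> (a, star_of S0 a) \<in> Lstar S0"
proof -
  obtain e where e: "e \<in> idems S0" "(a, e) \<in> Lstar S0"
    using assms by (auto simp: adequate_def abundant_def)
  have "\<exists>!e. e \<in> idems S0 \<and> (a, e) \<in> Lstar S0"
    using e star_unique[OF assms(1)] by blast
  thus ?thesis unfolding star_of_def by (rule theI')
qed

lemma plus_of_eq:
  assumes "adequate S0" "a \<in> S0" "e \<in> idems S0" "(a, e) \<in> Rstar S0"
  shows "plus_of S0 a = e"
  using plus_of_props[OF assms(1,2)] plus_unique[OF assms(1)] assms(3,4) by blast

lemma star_of_eq:
  assumes "adequate S0" "a \<in> S0" "e \<in> idems S0" "(a, e) \<in> Lstar S0"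
  shows "star_of S0 a = e"
  using star_of_props[OF assms(1,2)] star_unique[OF assms(1)] assms(3,4) by blast

lemma plus_of_idem:
  assumes "adequate S0" "e \<in> idems S0"
  shows "plus_of S0 e = e"
proof -
  have "e \<in> S0" using assms(2) by (simp add: idems_def)
  moreover have "(e, e) \<in> Rstar S0" using \<open>e \<in> S0\<close> by (simp add: Rstar_def)
  ultimately show ?thesis using plus_of_eq assms by blast
qed

lemma star_of_idem:
  assumes "adequate S0" "e \<in> idems S0"
  shows "star_of S0 e = e"
proof -
  have "e \<in> S0" using assms(2) by (simp add: idems_def)
  moreover have "(e, e) \<in> Lstar S0" using \<open>e \<in> S0\<close> by (simp add: Lstar_def)
  ultimately show ?thesis using star_of_eq assms by blast
qed

lemma rep_facts:
  assumes sub: "S0 \<subseteq> S" "subsemigroup S" "adequate S0"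
    and incl: "Rstar S0 \<subseteq> Rstar S" "Lstar S0 \<subseteq> Lstar S"
    and tr: "transversal_rep S0 S X a"
  shows "\<exists>E F. E \<in> idems S \<and> F \<in> idems S \<and> X = E * a * F \<and>
     E * plus_of S0 a = E \<and> plus_of S0 a * E = plus_of S0 a \<and>
     F * star_of S0 a = star_of S0 a \<and> star_of S0 a * F = F \<and>
     plus_of S0 a * a = a \<and> a * star_of S0 a = a \<and>
     plus_of S0 a \<in> idems S0 \<and> star_of S0 a \<in> idems S0 \<and> a \<in> S0 \<and>
     (\<forall>u\<in>S. u * X = X \<longrightarrow> u * E = E) \<and> (\<forall>u\<in>S. X * u = X \<longrightarrow> F * u = F)"
proof -
  define A where "A = plus_of S0 a"
  define P where "P = star_of S0 a"
  have aS0: "a \<in> S0" using tr by (simp add: transversal_rep_def)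
  obtain E F where EF: "E \<in> idems S" "F \<in> idems S" "X = E * a * F"
    "(E, A) \<in> greenL S" "(F, P) \<in> greenR S"
    using tr by (auto simp: transversal_rep_def A_def P_def)
  have A: "A \<in> idems S0" "(a, A) \<in> Rstar S0" using plus_of_props[OF sub(3) aS0] by (auto simp: A_def)
  have P: "P \<in> idems S0" "(a, P) \<in> Lstar S0" using star_of_props[OF sub(3) aS0] by (auto simp: P_def)
  have AS: "A \<in> S" "A * A = A" using A sub(1) by (auto simp: idems_def)
  have PS: "P \<in> S" "P * P = P" using P sub(1) by (auto simp: idems_def)
  have ES: "E \<in> S" "E * E = E" "F \<in> S" "F * F = F" using EF by (auto simp: idems_def)
  have aS: "a \<in> S" using aS0 sub(1) by auto
  have EA: "E * A = E" "A * E = A" using greenL_idem[OF sub(2) ES(1) AS(1) ES(2) AS(2)] EF(4) by auto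
  have FP: "P * F = F" "F * P = P" using greenR_idem[OF sub(2) ES(3) PS(1) ES(4) PS(2)] EF(5) by auto
  have RS: "(a, A) \<in> Rstar S" using A incl by auto
  have LS: "(a, P) \<in> Lstar S" using P incl by auto
  have Aa: "A * a = a" using rs_idem[OF A(2)] A by (auto simp: idems_def)
  have aP: "a * P = a" using ls_idem[OF P(2)] P by (auto simp: idems_def)
  have GR: "\<forall>u\<in>S. u * X = X \<longrightarrow> u * E = E"
  proof (intro ballI impI)
    fix u assume u: "u \<in> S" "u * X = X"
    have "u * (E * a * F) * P = E * a * F * P" using u EF(3) by simp
    hence "(u * E) * a = E * a" by (simp add: mult.assoc FP aP ml[OF aP])
    moreover have "u * E \<in> S" using u ES sub(2) by (simp add: subsemigroup_def)
    ultimately have "(u * E) * A = E * A" using rs_apply[OF RS] ES by blast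
    thus "u * E = E" by (simp add: mult.assoc EA)
  qed
  have GL: "\<forall>u\<in>S. X * u = X \<longrightarrow> F * u = F"
  proof (intro ballI impI)
    fix u assume u: "u \<in> S" "X * u = X"
    have "A * (E * a * F * u) = A * (E * a * F)" using u EF(3) by simp
    hence "a * (F * u) = a * F" by (simp add: mult.assoc EA ml[OF EA(2)] Aa ml[OF Aa])
    moreover have "F * u \<in> S" using u ES sub(2) by (simp add: subsemigroup_def)
    ultimately have "P * (F * u) = P * F" using ls_apply[OF LS] ES by blast
    thus "F * u = F" by (simp add: ml[OF FP(1)] FP)
  qed
  show ?thesis
    apply (rule exI[of _ E], rule exI[of _ F])
    using EF EA FP Aa aP A P aS0 GR GL by (simp add: A_def P_def)
qed


lemma bar_rep:
  assumes "\<forall>x\<in>S. \<exists>!x0. transversal_rep S0 S x x0" "x \<in> S"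
  shows "transversal_rep S0 S x (bar S0 S x)"
  unfolding bar_def using assms by (blast intro: theI')

lemma bar_eq:
  assumes "\<forall>x\<in>S. \<exists>!x0. transversal_rep S0 S x x0" "x \<in> S" "transversal_rep S0 S x x0"
  shows "bar S0 S x = x0"
  using bar_rep[OF assms(1,2)] assms by blast

lemma reg_data:
  assumes sub: "S0 \<subseteq> S" "subsemigroup S" "adequate S0"
    and incl: "Rstar S0 \<subseteq> Rstar S" "Lstar S0 \<subseteq> Lstar S"
    and uniq: "\<forall>x\<in>S. \<exists>!x0. transversal_rep S0 S x x0"
    and reg: "regular_in S x"
  shows "\<exists>a xs e f p A. bar S0 S x = a \<and> a \<in> S0 \<and> xs \<in> S0 \<and> e \<in> idems S \<and> f \<in> idems S \<and>
     p \<in> idems S0 \<and> A \<in> idems S0 \<and> xs * a = p \<and> a * xs = A \<and> a * p = a \<and> A * a = a \<and>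
     p * xs = xs \<and> xs * A = xs \<and> xs * x = f \<and> x * xs = e \<and> f * xs = xs \<and> xs * e = xs \<and>
     x * f = x \<and> e * x = x"
proof -
  obtain w where xw: "x \<in> S" "w \<in> S" "x * w * x = x" using reg by (auto simp: regular_in_def)
  have mS: "\<And>u v. u \<in> S \<Longrightarrow> v \<in> S \<Longrightarrow> u * v \<in> S" using sub(2) by (simp add: subsemigroup_def)
  define a where "a = bar S0 S x"
  have tra: "transversal_rep S0 S x a" using bar_rep[OF uniq xw(1)] by (simp add: a_def)
  define A where "A = plus_of S0 a"
  define p where "p = star_of S0 a"
  obtain e f where EF: "e \<in> idems S" "f \<in> idems S" "x = e * a * f"
     "e * A = e" "A * e = A" "f * p = p" "p * f = f" "A * a = a" "a * p = a"
     "A \<in> idems S0" "p \<in> idems S0" "a \<in> S0"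
     "\<forall>u\<in>S. u * x = x \<longrightarrow> u * e = e" "\<forall>u\<in>S. x * u = x \<longrightarrow> f * u = f"
    using rep_facts[OF sub incl tra] unfolding A_def p_def by blast
  have eS: "e \<in> S" "e * e = e" "f \<in> S" "f * f = f" using EF by (auto simp: idems_def)
  have AS: "A \<in> S" "A * A = A" "p \<in> S" "p * p = p" using EF(10,11) sub(1) by (auto simp: idems_def)
  have aS: "a \<in> S" using EF(12) sub(1) by auto
  define x' where "x' = w * x * w"
  have x'S: "x' \<in> S" using xw mS by (simp add: x'_def)
  have xx'x: "x * x' * x = x" using xw(3) by (simp add: x'_def mult.assoc)
  define xs where "xs = f * x' * e"
  have xsS: "xs \<in> S" using x'S eS mS by (simp add: xs_def)
  have ex: "e * x = x" using EF(3) eS(2) by (metis mult.assoc)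
  have xf: "x * f = x" using EF(3) eS(4) by (metis mult.assoc)
  have xxse: "x * xs = e"
  proof -
    have "(x * x') * e = e" using EF(13) xx'x mS[OF xw(1) x'S] by blast
    thus ?thesis by (simp add: xs_def mult.assoc) (metis mult.assoc xf)
  qed
  have xsx: "xs * x = f"
  proof -
    have "f * (x' * x) = f" using EF(14) xx'x mS[OF x'S xw(1)] by (metis mult.assoc)
    thus ?thesis by (simp add: xs_def mult.assoc ex)
  qed
  have xse: "xs * e = xs" by (simp add: xs_def mult.assoc eS)
  have fxs: "f * xs = xs" by (simp add: xs_def mult.assoc ml[OF eS(4)])
  have pxs: "p * xs = xs" by (simp add: xs_def mult.assoc ml[OF EF(7)] EF(7))
  have xsA: "xs * A = xs" by (simp add: xs_def mult.assoc EF(4))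
  have aAxp: "a = A * x * p" using EF(3) by (simp add: mult.assoc ml[OF EF(5)] EF(6) EF(8) EF(9) ml[OF EF(8)])
  have xsa: "xs * a = p"
    by (subst aAxp) (simp add: mult.assoc[symmetric] xsA xsx EF(6))
  have axs: "a * xs = A"
    by (subst aAxp) (simp add: mult.assoc pxs xxse EF(5))
  define z where "z = bar S0 S xs"
  have trz: "transversal_rep S0 S xs z" using bar_rep[OF uniq xsS] by (simp add: z_def)
  define Z1 where "Z1 = plus_of S0 z"
  define Z2 where "Z2 = star_of S0 z"
  obtain e2 f2 where EF2: "e2 \<in> idems S" "f2 \<in> idems S" "xs = e2 * z * f2"
     "e2 * Z1 = e2" "Z1 * e2 = Z1" "f2 * Z2 = Z2" "Z2 * f2 = f2" "Z1 * z = z" "z * Z2 = z"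
     "Z1 \<in> idems S0" "Z2 \<in> idems S0" "z \<in> S0"
     "\<forall>u\<in>S. u * xs = xs \<longrightarrow> u * e2 = e2" "\<forall>u\<in>S. xs * u = xs \<longrightarrow> f2 * u = f2"
    using rep_facts[OF sub incl trz] unfolding Z1_def Z2_def by blast
  have e2S: "e2 \<in> S" "e2 * e2 = e2" "f2 \<in> S" "f2 * f2 = f2" using EF2 by (auto simp: idems_def)
  have ZS: "Z1 \<in> S" "Z1 * Z1 = Z1" "Z2 \<in> S" "Z2 * Z2 = Z2" using EF2(10,11) sub(1) by (auto simp: idems_def)
  have pe2: "p * e2 = e2" using EF2(13) AS(3) pxs by blast
  have e2xs: "e2 * xs = xs" using EF2(3) e2S(2) by (metis mult.assoc)
  have e2f: "e2 * f = f"
  proof -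
    have "e2 * xs * x = xs * x" using e2xs by simp
    thus ?thesis by (simp add: mult.assoc xsx)
  qed
  have e2p: "e2 * p = p" using e2f EF(6) by (metis mult.assoc)
  have f2A: "f2 * A = f2" using EF2(14) AS(1) xsA by blast
  have xsf2: "xs * f2 = xs" using EF2(3) e2S(4) by (metis mult.assoc)
  have ef2: "e * f2 = e"
  proof -
    have "x * (xs * f2) = x * xs" using xsf2 by simp
    thus ?thesis by (simp add: mult.assoc[symmetric] xxse)
  qed
  have Af2: "A * f2 = A" using ef2 EF(5) by (metis mult.assoc)
  have pid: "plus_of S0 p = p" "star_of S0 p = p" using plus_of_idem star_of_idem sub(3) EF(11) by auto
  have Aid: "plus_of S0 A = A" "star_of S0 A = A" using plus_of_idem star_of_idem sub(3) EF(10) by auto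
  have Z1id: "plus_of S0 Z1 = Z1" "star_of S0 Z1 = Z1" using plus_of_idem star_of_idem sub(3) EF2(10) by auto
  have Z2id: "plus_of S0 Z2 = Z2" "star_of S0 Z2 = Z2" using plus_of_idem star_of_idem sub(3) EF2(11) by auto
  have reflL: "(u, u) \<in> greenL S" if "u \<in> S" for u using that by (simp add: greenL_def)
  have reflR: "(u, u) \<in> greenR S" if "u \<in> S" for u using that by (simp add: greenR_def)
  have pS0: "p \<in> S0" "A \<in> S0" "Z1 \<in> S0" "Z2 \<in> S0" using EF(10,11) EF2(10,11) by (auto simp: idems_def)
  have t1: "transversal_rep S0 S e2 p"
    unfolding transversal_rep_def
    apply (rule conjI, rule pS0)
    apply (rule bexI[of _ p], rule bexI[of _ e2])
    using EF(11) EF2(1) pS0 sub(1) pid reflL[OF AS(3)] greenR_idem[OF sub(2) e2S(1) AS(3) e2S(2) AS(4)] pe2 e2p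
    by (auto simp: mult.assoc AS(4) idems_def)
  have t2: "transversal_rep S0 S e2 Z1"
    unfolding transversal_rep_def
    apply (rule conjI, rule pS0)
    apply (rule bexI[of _ e2], rule bexI[of _ Z1])
    using EF2(1,10) pS0 sub(1) Z1id reflR[OF ZS(1)] greenL_idem[OF sub(2) e2S(1) ZS(1) e2S(2) ZS(2)] EF2(4,5)
    by (auto simp: mult.assoc ZS(2) idems_def)
  have pZ1: "p = Z1" using bar_eq[OF uniq e2S(1) t1] bar_eq[OF uniq e2S(1) t2] by simp
  have t3: "transversal_rep S0 S f2 A"
    unfolding transversal_rep_def
    apply (rule conjI, rule pS0)
    apply (rule bexI[of _ f2], rule bexI[of _ A])
    using EF(10) EF2(2) pS0 sub(1) Aid reflR[OF AS(1)] greenL_idem[OF sub(2) e2S(3) AS(1) e2S(4) AS(2)] f2A Af2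
    by (auto simp: mult.assoc AS(2) idems_def)
  have t4: "transversal_rep S0 S f2 Z2"
    unfolding transversal_rep_def
    apply (rule conjI, rule pS0)
    apply (rule bexI[of _ Z2], rule bexI[of _ f2])
    using EF2(2,11) pS0 sub(1) Z2id reflL[OF ZS(3)] greenR_idem[OF sub(2) e2S(3) ZS(3) e2S(4) ZS(4)] EF2(6,7)
    by (auto simp: mult.assoc ZS(4) idems_def)
  have AZ2: "A = Z2" using bar_eq[OF uniq e2S(3) t3] bar_eq[OF uniq e2S(3) t4] by simp
  have "xs = p * xs * A" using pxs xsA by (simp add: mult.assoc)
  also have "\<dots> = Z1 * e2 * z * f2 * Z2" using EF2(3) pZ1 AZ2 by (simp add: mult.assoc)
  also have "\<dots> = z" by (simp add: EF2(5) mult.assoc ml[OF EF2(6)] EF2(6) EF2(9) ml[OF EF2(5)] EF2(8))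
  finally have xsz: "xs = z" .
  have xsS0: "xs \<in> S0" using xsz EF2(12) by simp
  show ?thesis
    apply (rule exI[of _ a], rule exI[of _ xs], rule exI[of _ e], rule exI[of _ f],
           rule exI[of _ p], rule exI[of _ A])
    using a_def EF xsS0 xsa axs pxs xsA xsx xxse fxs xse xf ex by simp
qed


theorem proposition2p5:
  fixes S S0 :: "'a::semigroup_mult set" and x y :: 'a
  assumes "quasi_adequate S"
    and "adequate_transversal S0 S"
    and "regular_in S x" and "regular_in S y"
  shows "bar S0 S (x * y) = bar S0 S x * bar S0 S y"
proof -
  have subS: "subsemigroup S" using assms(1) by (simp add: quasi_adequate_def abundant_def)
  have idS: "subsemigroup (idems S)" using assms(1) by (simp add: quasi_adequate_def)
  have ad: "adequate S0" using assms(2) by (simp add: adequate_transversal_def)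
  have st: "star_subsemigroup S0 S" using assms(2) by (simp add: adequate_transversal_def)
  have sub0: "S0 \<subseteq> S" using st by (simp add: star_subsemigroup_def)
  have incl: "Rstar S0 \<subseteq> Rstar S" "Lstar S0 \<subseteq> Lstar S" using st by (auto simp: star_subsemigroup_def)
  have uniq: "\<forall>x\<in>S. \<exists>!x0. transversal_rep S0 S x x0" using assms(2) by (simp add: adequate_transversal_def)
  have subS0: "subsemigroup S0" using ad by (simp add: adequate_def abundant_def)
  have mS: "\<And>u v. u \<in> S \<Longrightarrow> v \<in> S \<Longrightarrow> u * v \<in> S" using subS by (simp add: subsemigroup_def)
  have mS0: "\<And>u v. u \<in> S0 \<Longrightarrow> v \<in> S0 \<Longrightarrow> u * v \<in> S0" using subS0 by (simp add: subsemigroup_def)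
  obtain a xs e f p A where X: "bar S0 S x = a" "a \<in> S0" "xs \<in> S0" "e \<in> idems S" "f \<in> idems S"
     "p \<in> idems S0" "A \<in> idems S0" "xs * a = p" "a * xs = A" "a * p = a" "A * a = a"
     "p * xs = xs" "xs * A = xs" "xs * x = f" "x * xs = e" "f * xs = xs" "xs * e = xs"
     "x * f = x" "e * x = x"
    using reg_data[OF sub0 subS ad incl uniq assms(3)] by blast
  obtain b ys g h Q q where Y: "bar S0 S y = b" "b \<in> S0" "ys \<in> S0" "g \<in> idems S" "h \<in> idems S"
     "Q \<in> idems S0" "q \<in> idems S0" "ys * b = Q" "b * ys = q" "b * Q = b" "q * b = b"
     "Q * ys = ys" "ys * q = ys" "ys * y = h" "y * ys = g" "h * ys = ys" "ys * g = ys"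
     "y * h = y" "g * y = y"
    using reg_data[OF sub0 subS ad incl uniq assms(4)] by blast
  have xS: "x \<in> S" "y \<in> S" using assms(3,4) by (auto simp: regular_in_def)
  have pq: "p * q = q * p" using ad X(6) Y(7) by (simp add: adequate_def)
  have fg: "f * g * (f * g) = f * g" "g * f * (g * f) = g * f"
    using idS X(5) Y(4) by (auto simp: subsemigroup_def idems_def)
  define c where "c = a * b"
  define c' where "c' = ys * xs"
  have cS0: "c \<in> S0" "c' \<in> S0" using mS0 X(2,3) Y(2,3) by (auto simp: c_def c'_def)
  have cS: "c \<in> S" "c' \<in> S" using cS0 sub0 by auto
  have i: "c * c' * c = c"
  proof -
    have "c * c' * c = a * (b * ys) * (xs * a) * b" by (simp add: c_def c'_def mult.assoc)
    also have "\<dots> = a * (q * p) * b" using X(8) Y(9) by (simp add: mult.assoc)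
    also have "\<dots> = (a * p) * (q * b)" using pq by (metis mult.assoc)
    also have "\<dots> = c" using X(10) Y(11) by (simp add: c_def)
    finally show ?thesis .
  qed
  have ii: "c' * c * c' = c'"
  proof -
    have "c' * c * c' = ys * (xs * a) * (b * ys) * xs" by (simp add: c_def c'_def mult.assoc)
    also have "\<dots> = (ys * q) * (p * xs)" using X(8) Y(9) pq by (simp add: mult.assoc)
    also have "\<dots> = c'" using X(12) Y(13) by (simp add: c'_def)
    finally show ?thesis .
  qed
  have iii: "c' * (x * y) * c' = c'"
  proof -
    have "c' * (x * y) * c' = ys * (xs * x) * (y * ys) * xs" by (simp add: c'_def mult.assoc)
    also have "\<dots> = ys * f * g * xs" using X(14) Y(15) by (simp add: mult.assoc)
    also have "\<dots> = (ys * g) * (f * g) * (f * xs)" using X(16) Y(17) by (simp add: mult.assoc)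
    also have "\<dots> = ys * ((g * f) * (g * f)) * xs" by (simp add: mult.assoc)
    also have "\<dots> = ys * g * f * xs" using fg(2) by (simp add: mult.assoc)
    also have "\<dots> = c'" using X(16) Y(17) by (simp add: c'_def mult.assoc)
    finally show ?thesis .
  qed
  define s where "s = c * c'"
  define t where "t = c' * c"
  have sS0: "s \<in> S0" "t \<in> S0" using mS0 cS0 by (auto simp: s_def t_def)
  have ss: "s * s = s" using i by (simp add: s_def mult.assoc[symmetric])
  have tt: "t * t = t" using ii by (simp add: t_def mult.assoc[symmetric])
  have sc: "s * c = c" using i by (simp add: s_def)
  have ct: "c * t = c" using i by (simp add: t_def mult.assoc)
  have plus_c: "plus_of S0 c = s"
    using plus_of_eq[OF ad cS0(1)] sS0 ss rs_intro[OF cS0(1) sS0(1) sc s_def[symmetric]]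
    by (simp add: idems_def)
  have star_c: "star_of S0 c = t"
    using star_of_eq[OF ad cS0(1)] sS0 tt ls_intro[OF cS0(1) sS0(2) ct t_def[symmetric]]
    by (simp add: idems_def)
  define E where "E = x * y * c'"
  define F where "F = c' * (x * y)"
  have ES: "E \<in> S" "F \<in> S" using mS xS cS by (auto simp: E_def F_def)
  have EE: "E * E = E" using iii by ((simp add: E_def mult.assoc), (metis mult.assoc)?)
  have FF: "F * F = F" using iii by ((simp add: F_def mult.assoc), (metis mult.assoc)?)
  have sSS: "s \<in> S" "t \<in> S" using sS0 sub0 by auto
  have Es: "E * s = E" using ii by ((simp add: E_def s_def mult.assoc), (metis mult.assoc)?)
  have sE: "s * E = s" using iii by ((simp add: E_def s_def mult.assoc), (metis mult.assoc)?)
  have tF: "t * F = F" using ii by ((simp add: F_def t_def mult.assoc), (metis mult.assoc)?)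
  have Ft: "F * t = t" using iii by ((simp add: F_def t_def mult.assoc), (metis mult.assoc)?)
  have EL: "(E, s) \<in> greenL S" using greenL_idem[OF subS ES(1) sSS(1) EE ss] Es sE by simp
  have FR: "(F, t) \<in> greenR S" using greenR_idem[OF subS ES(2) sSS(2) FF tt] tF Ft by simp
  have xy: "x * y = E * c * F"
  proof -
    have "E * c * F = x * y * (c' * c * c') * (x * y)" by (simp add: E_def F_def mult.assoc)
    also have "\<dots> = x * (y * ys) * (xs * x) * y" using ii by (simp add: c'_def mult.assoc)
    also have "\<dots> = (x * f) * (g * f) * (g * y)" using X(14) Y(15) X(18) Y(19) by (simp add: mult.assoc)
    also have "\<dots> = x * ((f * g) * (f * g)) * y" by (simp add: mult.assoc)
    also have "\<dots> = (x * f) * (g * y)" using fg(1) by (simp add: mult.assoc)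
    also have "\<dots> = x * y" using X(18) Y(19) by simp
    finally show ?thesis by simp
  qed
  have tr: "transversal_rep S0 S (x * y) c"
    unfolding transversal_rep_def
    using cS0(1) ES EE FF xy EL FR plus_c star_c by (auto simp: idems_def)
  have "bar S0 S (x * y) = c" using bar_eq[OF uniq mS[OF xS] tr] .
  thus ?thesis using X(1) Y(1) by (simp add: c_def)
qed

end
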